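(* Let $X$ be an irreducible finite dimensional CAT(0) cube complex. For any infinite descending chain $s_1\supsetneq s_2\supsetneq\cdots$ of pairwise strongly separated half-spaces, $\bigcap_n s_n\subset\overline X$ is a single point. In particular, if $\xi_1\ne\xi_2$ are in $\partial_rX$, then there are disjoint strongly separated half-spaces $h_1,h_2$ with $\xi_1\in h_1$ and $\xi_2\in h_2$.
   Context: Conventions. $X$ is a finite-dimensional, second countable CAT(0) cube complex identified with its vertex set. $\mathfrak H$ is the set of half-spaces, $h^*=X\setminus h$; $U_v=\{h:v\in h\}$; Roller compactification $\overline X$ = closure of $\{U_v\}$ in $2^{\mathfrak H}$ (product topology), $\partial X=\overline X\setminus X$; each $\xi\in\overline X$ is a subset $U_\xi$, and $h$ is regarded as the subset $\{\xi:h\in U_\xi\}$ of $\overline X$. Transverse: $h\cap k,h\cap k^*,h^*\cap k,h^*\cap k^*$ all nonempty; strongly separated: no half-space transverse to both. Irreducible: not a nontrivial product. Regular points $\partial_rX$ (irreducible $X$): $\xi\in\partial X$ such that for all $h_1,h_2\in U_\xi$ there is $k\in U_\xi$ with $k\subset h_1\cap h_2$ strongly separated from both. *)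

theory Defs
  imports Main "HOL-Library.Countable_Set"
begin

text \<open>A (finite-dimensional) CAT(0) cube complex is modelled by its 1-skeleton, which is a
median graph (Chepoi/Roller/Gerasimov): vertex set V, symmetric irreflexive adjacency E.\<close>

definition is_walk :: "('v \<Rightarrow> 'v \<Rightarrow> bool) \<Rightarrow> 'v list \<Rightarrow> bool" where
  "is_walk E xs \<longleftrightarrow> xs \<noteq> [] \<and> (\<forall>i. Suc i < length xs \<longrightarrow> E (xs ! i) (xs ! Suc i))"

definition gdist :: "('v \<Rightarrow> 'v \<Rightarrow> bool) \<Rightarrow> 'v \<Rightarrow> 'v \<Rightarrow> nat" where
  "gdist E u v = (LEAST n. \<exists>xs. is_walk E xs \<and> hd xs = u \<and> last xs = v \<and> length xs = Suc n)"

definition is_graph :: "'v set \<Rightarrow> ('v \<Rightarrow> 'v \<Rightarrow> bool) \<Rightarrow> bool" where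
  "is_graph V E \<longleftrightarrow> (\<forall>u v. E u v \<longrightarrow> u \<in> V \<and> v \<in> V \<and> E v u \<and> u \<noteq> v)"

definition graph_connected :: "'v set \<Rightarrow> ('v \<Rightarrow> 'v \<Rightarrow> bool) \<Rightarrow> bool" where
  "graph_connected V E \<longleftrightarrow>
     (\<forall>u\<in>V. \<forall>v\<in>V. \<exists>xs. is_walk E xs \<and> hd xs = u \<and> last xs = v)"

definition interval :: "'v set \<Rightarrow> ('v \<Rightarrow> 'v \<Rightarrow> bool) \<Rightarrow> 'v \<Rightarrow> 'v \<Rightarrow> 'v set" where
  "interval V E x y = {w \<in> V. gdist E x w + gdist E w y = gdist E x y}"

definition median_graph :: "'v set \<Rightarrow> ('v \<Rightarrow> 'v \<Rightarrow> bool) \<Rightarrow> bool" where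
  "median_graph V E \<longleftrightarrow> V \<noteq> {} \<and> is_graph V E \<and> graph_connected V E \<and>
     (\<forall>x\<in>V. \<forall>y\<in>V. \<forall>z\<in>V. \<exists>!m. m \<in> interval V E x y \<inter> interval V E y z \<inter> interval V E x z)"

text \<open>Half-spaces: the two sides of each hyperplane (edge class).\<close>
definition halfspaces :: "'v set \<Rightarrow> ('v \<Rightarrow> 'v \<Rightarrow> bool) \<Rightarrow> 'v set set" where
  "halfspaces V E = {{w \<in> V. gdist E w u < gdist E w v} | u v. E u v}"

definition transverse :: "'v set \<Rightarrow> 'v set \<Rightarrow> 'v set \<Rightarrow> bool" where
  "transverse V h k \<longleftrightarrow> h \<inter> k \<noteq> {} \<and> h \<inter> (V - k) \<noteq> {} \<and> (V - h) \<inter> k \<noteq> {}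
      \<and> (V - h) \<inter> (V - k) \<noteq> {}"

definition strongly_separated :: "'v set \<Rightarrow> ('v \<Rightarrow> 'v \<Rightarrow> bool) \<Rightarrow> 'v set \<Rightarrow> 'v set \<Rightarrow> bool" where
  "strongly_separated V E h k \<longleftrightarrow>
     \<not> (\<exists>m \<in> halfspaces V E. transverse V m h \<and> transverse V m k)"

text \<open>Finite dimension: a uniform bound on families of pairwise transverse half-spaces
(= number of pairwise transverse hyperplanes = dimension of cubes).\<close>
definition finite_dimensional :: "'v set \<Rightarrow> ('v \<Rightarrow> 'v \<Rightarrow> bool) \<Rightarrow> bool" where
  "finite_dimensional V E \<longleftrightarrow> (\<exists>n::nat. \<forall>F \<subseteq> halfspaces V E.
      (\<forall>h\<in>F. \<forall>k\<in>F. h \<noteq> k \<longrightarrow> transverse V h k) \<longrightarrow> finite F \<and> card F \<le> n)"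

text \<open>Cartesian product of graphs; X is reducible iff its 1-skeleton is isomorphic to the
Cartesian product of two graphs with at least two vertices each (the factors can be taken
to be subgraphs of X, namely fibres, so they live in the same vertex type).\<close>
definition cart_prod_adj :: "('v \<Rightarrow> 'v \<Rightarrow> bool) \<Rightarrow> ('v \<Rightarrow> 'v \<Rightarrow> bool) \<Rightarrow> 'v \<times> 'v \<Rightarrow> 'v \<times> 'v \<Rightarrow> bool" where
  "cart_prod_adj E1 E2 p q \<longleftrightarrow>
     (E1 (fst p) (fst q) \<and> snd p = snd q) \<or> (fst p = fst q \<and> E2 (snd p) (snd q))"

definition irreducible_cc :: "'v set \<Rightarrow> ('v \<Rightarrow> 'v \<Rightarrow> bool) \<Rightarrow> bool" where
  "irreducible_cc V E \<longleftrightarrow> \<not> (\<exists>(A::'v set) (B::'v set) E1 E2 f.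
      is_graph A E1 \<and> is_graph B E2 \<and>
      (\<exists>a1\<in>A. \<exists>a2\<in>A. a1 \<noteq> a2) \<and> (\<exists>b1\<in>B. \<exists>b2\<in>B. b1 \<noteq> b2) \<and>
      bij_betw f V (A \<times> B) \<and>
      (\<forall>u\<in>V. \<forall>v\<in>V. E u v \<longleftrightarrow> cart_prod_adj E1 E2 (f u) (f v)))"

text \<open>Roller compactification: closure of {U_v} in 2^H with the product topology,
unfolded: U is in the closure iff it agrees with some U_v on every finite set of half-spaces.\<close>
definition Uv :: "'v set \<Rightarrow> ('v \<Rightarrow> 'v \<Rightarrow> bool) \<Rightarrow> 'v \<Rightarrow> 'v set set" where
  "Uv V E v = {h \<in> halfspaces V E. v \<in> h}"

definition roller :: "'v set \<Rightarrow> ('v \<Rightarrow> 'v \<Rightarrow> bool) \<Rightarrow> 'v set set set" where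
  "roller V E = {U. U \<subseteq> halfspaces V E \<and>
      (\<forall>F. finite F \<and> F \<subseteq> halfspaces V E \<longrightarrow> (\<exists>v\<in>V. U \<inter> F = Uv V E v \<inter> F))}"

definition roller_boundary :: "'v set \<Rightarrow> ('v \<Rightarrow> 'v \<Rightarrow> bool) \<Rightarrow> 'v set set set" where
  "roller_boundary V E = roller V E - Uv V E ` V"

definition hs_ext :: "'v set \<Rightarrow> ('v \<Rightarrow> 'v \<Rightarrow> bool) \<Rightarrow> 'v set \<Rightarrow> 'v set set set" where
  "hs_ext V E h = {U \<in> roller V E. h \<in> U}"

definition regular_points :: "'v set \<Rightarrow> ('v \<Rightarrow> 'v \<Rightarrow> bool) \<Rightarrow> 'v set set set" where
  "regular_points V E = {\<xi> \<in> roller_boundary V E. \<forall>h1\<in>\<xi>. \<forall>h2\<in>\<xi>. \<exists>k\<in>\<xi>.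
      k \<subseteq> h1 \<inter> h2 \<and> strongly_separated V E k h1 \<and> strongly_separated V E k h2}"

end

theory Submission imports Defs begin

lemma is_walk_Cons:
  "is_walk E (x # xs) \<longleftrightarrow> xs = [] \<or> (E x (hd xs) \<and> is_walk E xs)"
proof (cases xs)
  case Nil then show ?thesis by (simp add: is_walk_def)
next
  case (Cons y ys)
  have "(\<forall>i. Suc i < length (x#y#ys) \<longrightarrow> E ((x#y#ys) ! i) ((x#y#ys) ! Suc i))
        \<longleftrightarrow> E x y \<and> (\<forall>i. Suc i < length (y#ys) \<longrightarrow> E ((y#ys) ! i) ((y#ys) ! Suc i))"
    (is "?L \<longleftrightarrow> ?R")
  proof
    assume L: ?L
    show ?R
    proof
      show "E x y" using L[rule_format, of 0] by simp
      show "\<forall>i. Suc i < length (y#ys) \<longrightarrow> E ((y#ys) ! i) ((y#ys) ! Suc i)"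
      proof (intro allI impI)
        fix i assume "Suc i < length (y#ys)"
        then show "E ((y#ys) ! i) ((y#ys) ! Suc i)" using L[rule_format, of "Suc i"] by simp
      qed
    qed
  next
    assume R: ?R
    show ?L
    proof (intro allI impI)
      fix i assume i: "Suc i < length (x#y#ys)"
      show "E ((x#y#ys) ! i) ((x#y#ys) ! Suc i)"
      proof (cases i)
        case 0 then show ?thesis using R by simp
      next
        case (Suc j) then show ?thesis using R i by simp
      qed
    qed
  qed
  then show ?thesis using Cons by (simp add: is_walk_def)
qed

lemma is_walk_append:
  "is_walk E xs \<Longrightarrow> is_walk E ys \<Longrightarrow> last xs = hd ys \<Longrightarrow> is_walk E (xs @ tl ys)"
proof (induction xs)
  case Nil then show ?case by (simp add: is_walk_def)
next
  case (Cons x xs)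
  show ?case
  proof (cases "xs = []")
    case True
    then show ?thesis using Cons.prems by (cases ys) (auto simp: is_walk_def)
  next
    case False
    then have "E x (hd xs)" "is_walk E xs" using Cons.prems(1) is_walk_Cons by metis+
    then have "is_walk E (xs @ tl ys)" using Cons False by simp
    then show ?thesis using False \<open>E x (hd xs)\<close> by (simp add: is_walk_Cons)
  qed
qed

lemma is_walk_rev:
  assumes "is_walk E xs" "\<And>u v. E u v \<Longrightarrow> E v u"
  shows "is_walk E (rev xs)"
  unfolding is_walk_def
proof (intro conjI allI impI)
  show "rev xs \<noteq> []" using assms(1) by (simp add: is_walk_def)
  fix i assume i: "Suc i < length (rev xs)"
  let ?n = "length xs"
  have a: "rev xs ! i = xs ! (?n - Suc i)" using i by (simp add: rev_nth)
  have b: "rev xs ! Suc i = xs ! (?n - Suc (Suc i))" using i by (simp add: rev_nth)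
  have c: "Suc (?n - Suc (Suc i)) = ?n - Suc i" using i by simp
  have "E (xs ! (?n - Suc (Suc i))) (xs ! Suc (?n - Suc (Suc i)))"
    using assms(1) i unfolding is_walk_def by (metis c diff_less length_rev zero_less_Suc less_trans_Suc Suc_lessD)
  then show "E (rev xs ! i) (rev xs ! Suc i)" using a b c assms(2) by metis
qed

context
  fixes V :: "'v set" and E :: "'v \<Rightarrow> 'v \<Rightarrow> bool"
  assumes M: "median_graph V E"
begin

lemma G: "is_graph V E" using M by (simp add: median_graph_def)
lemma Esym: "E u v \<Longrightarrow> E v u" using G by (simp add: is_graph_def)
lemma EV: "E u v \<Longrightarrow> u \<in> V \<and> v \<in> V" using G by (simp add: is_graph_def)
lemma Eneq: "E u v \<Longrightarrow> u \<noteq> v" using G by (simp add: is_graph_def)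

lemma gd_walk:
  assumes "u \<in> V" "v \<in> V"
  shows "\<exists>xs. is_walk E xs \<and> hd xs = u \<and> last xs = v \<and> length xs = Suc (gdist E u v)"
proof -
  obtain xs where xs: "is_walk E xs" "hd xs = u" "last xs = v"
    using M assms unfolding median_graph_def graph_connected_def by blast
  then have ne: "xs \<noteq> []" by (simp add: is_walk_def)
  have "\<exists>n ys. is_walk E ys \<and> hd ys = u \<and> last ys = v \<and> length ys = Suc n"
    using xs ne by (intro exI[of _ "length xs - 1"] exI[of _ xs]) auto
  then show ?thesis unfolding gdist_def by (rule LeastI_ex)
qed

lemma gd_le:
  assumes "is_walk E xs" "hd xs = u" "last xs = v"
  shows "gdist E u v \<le> length xs - 1"
proof -
  have ne: "xs \<noteq> []" using assms by (simp add: is_walk_def)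
  show ?thesis unfolding gdist_def
    by (rule Least_le) (use assms ne in auto)
qed

lemma gd_refl: "gdist E u u = 0"
  using gd_le[of "[u]" u u] by (simp add: is_walk_def)

lemma gd_zero: "u \<in> V \<Longrightarrow> v \<in> V \<Longrightarrow> gdist E u v = 0 \<Longrightarrow> u = v"
  using gd_walk[of u v] by (auto simp: length_Suc_conv)

lemma gd_edge: "E u v \<Longrightarrow> gdist E u v = 1"
proof -
  assume e: "E u v"
  have "gdist E u v \<le> 1" using gd_le[of "[u,v]" u v] e by (simp add: is_walk_def)
  moreover have "gdist E u v \<noteq> 0" using gd_zero EV Eneq e by metis
  ultimately show ?thesis by simp
qed

lemma gd_tri: "x \<in> V \<Longrightarrow> y \<in> V \<Longrightarrow> z \<in> V \<Longrightarrow> gdist E x z \<le> gdist E x y + gdist E y z"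
proof -
  assume V: "x \<in> V" "y \<in> V" "z \<in> V"
  obtain xs where xs: "is_walk E xs" "hd xs = x" "last xs = y" "length xs = Suc (gdist E x y)"
    using gd_walk V by blast
  obtain ys where ys: "is_walk E ys" "hd ys = y" "last ys = z" "length ys = Suc (gdist E y z)"
    using gd_walk V by blast
  have w: "is_walk E (xs @ tl ys)" using is_walk_append xs ys by metis
  have ne: "xs \<noteq> []" "ys \<noteq> []" using xs ys by auto
  have h: "hd (xs @ tl ys) = x" using ne xs by simp
  have l: "last (xs @ tl ys) = z"
  proof (cases "tl ys = []")
    case True
    then have "ys = [y]" using ne ys by (cases ys) auto
    then show ?thesis using xs ys True by simp
  next
    case False
    then show ?thesis using ys ne by (simp add: last_tl)
  qed
  have "gdist E x z \<le> length (xs @ tl ys) - 1" using gd_le[OF w h l] .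
  then show ?thesis using xs ys by simp
qed

lemma gd_sym: "x \<in> V \<Longrightarrow> y \<in> V \<Longrightarrow> gdist E x y = gdist E y x"
proof -
  have a: "gdist E y x \<le> gdist E x y" if xy: "x \<in> V" "y \<in> V" for x y
  proof -
    obtain xs where xs: "is_walk E xs" "hd xs = x" "last xs = y" "length xs = Suc (gdist E x y)"
      using gd_walk xy by blast
    have ne: "xs \<noteq> []" using xs by auto
    have "is_walk E (rev xs)" using is_walk_rev xs Esym by blast
    moreover have "hd (rev xs) = y" "last (rev xs) = x" using xs ne by (auto simp: hd_rev last_rev)
    ultimately show ?thesis using gd_le[of "rev xs" y x] xs by simp
  qed
  show "x \<in> V \<Longrightarrow> y \<in> V \<Longrightarrow> gdist E x y = gdist E y x" using a by (metis le_antisym)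
qed

lemma gd_step:
  assumes "u \<in> V" "z \<in> V" "u \<noteq> z"
  shows "\<exists>p. E u p \<and> gdist E p z + 1 = gdist E u z"
proof -
  obtain xs where xs: "is_walk E xs" "hd xs = u" "last xs = z" "length xs = Suc (gdist E u z)"
    using gd_walk assms by blast
  obtain p rest where xs': "xs = u # p # rest"
    using xs assms(3) by (cases xs; cases "tl xs") auto
  have e: "E u p" and w: "is_walk E (p # rest)" using xs(1) xs' is_walk_Cons by (metis list.distinct(1) list.sel(1))+
  have lz: "last (p # rest) = z" using xs(3) xs' by simp
  have "gdist E p z \<le> length (p # rest) - 1" using gd_le[OF w _ lz] by simp
  moreover have "gdist E u z \<le> gdist E u p + gdist E p z" using gd_tri assms EV e by blast
  ultimately show ?thesis using e gd_edge xs xs' by (intro exI[of _ p]) auto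
qed


lemma edge_side:
  assumes e: "E a b" and w: "w \<in> V"
  shows "gdist E w b = gdist E w a + 1 \<or> gdist E w a = gdist E w b + 1"
proof -
  have ab: "a \<in> V" "b \<in> V" using EV e by auto
  obtain m where m: "m \<in> interval V E w a" "m \<in> interval V E a b" "m \<in> interval V E w b"
    using M w ab unfolding median_graph_def by blast
  have mV: "m \<in> V" using m by (simp add: interval_def)
  have "gdist E a m + gdist E m b = 1" using m(2) gd_edge[OF e] by (simp add: interval_def)
  then have "gdist E a m = 0 \<or> gdist E m b = 0" by linarith
  then have "m = a \<or> m = b" using gd_zero[of a m] gd_zero[of m b] mV ab by auto
  then show ?thesis
  proof
    assume "m = a" then show ?thesis using m(3) gd_edge[OF e] by (simp add: interval_def)
  next
    assume "m = b" then show ?thesis using m(1) gd_edge[OF Esym[OF e]] by (simp add: interval_def)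
  qed
qed

definition "Wh a b = {w \<in> V. gdist E w a < gdist E w b}"

lemma Wh_compl: "E a b \<Longrightarrow> V - Wh a b = Wh b a"
  using edge_side unfolding Wh_def by fastforce

lemma Wh_mem: "E a b \<Longrightarrow> a \<in> Wh a b"
  using gd_refl gd_edge EV unfolding Wh_def by fastforce

lemma Wh_eq: "E a b \<Longrightarrow> w \<in> Wh a b \<Longrightarrow> gdist E w b = gdist E w a + 1"
  using edge_side unfolding Wh_def by fastforce

lemma convex:
  assumes e: "E a b"
  shows "u \<in> Wh a b \<Longrightarrow> w \<in> Wh a b \<Longrightarrow> z \<in> V \<Longrightarrow>
         gdist E u z + gdist E z w = gdist E u w \<Longrightarrow> z \<in> Wh a b"
proof (induction "gdist E u w" arbitrary: u w z rule: less_induct)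
  case less
  note uW = less.prems(1) and wW = less.prems(2) and zV = less.prems(3) and zI = less.prems(4)
  have ab: "a \<in> V" "b \<in> V" using EV e by auto
  have uV: "u \<in> V" and wV: "w \<in> V" using uW wW by (auto simp: Wh_def)
  show ?case
  proof (rule ccontr)
    assume zn: "z \<notin> Wh a b"
    then have zW: "z \<in> Wh b a" using Wh_compl[OF e] zV by blast
    have uz: "u \<noteq> z" "w \<noteq> z" using zn uW wW by auto
    obtain p where p: "E u p" "gdist E p z + 1 = gdist E u z" using gd_step uV zV uz by blast
    have pV: "p \<in> V" using EV p by blast
    have dp1: "gdist E p w \<le> gdist E p z + gdist E z w" using gd_tri pV zV wV by blast
    have dp2: "gdist E u w \<le> gdist E u p + gdist E p w" using gd_tri pV uV wV by blast
    have dup: "gdist E u p = 1" using gd_edge p by blast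
    have pw: "gdist E p w + 1 = gdist E u w" using dp1 dp2 dup p zI by linarith
    have pnot: "p \<notin> Wh a b"
    proof
      assume "p \<in> Wh a b"
      then have "z \<in> Wh a b" using less.hyps[of p w z] pw wW zV p dp1 dp2 dup zI by linarith
      then show False using zn by blast
    qed
    then have pW: "p \<in> Wh b a" using Wh_compl[OF e] pV by blast
    have wz: "gdist E w z = gdist E z w" using gd_sym wV zV by simp
    obtain q where q: "E w q" "gdist E q z + 1 = gdist E w z" using gd_step wV zV uz by blast
    have qV: "q \<in> V" using EV q by blast
    have zq: "gdist E z q = gdist E q z" using gd_sym qV zV by simp
    have dq1: "gdist E u q \<le> gdist E u z + gdist E z q" using gd_tri qV zV uV by blast
    have dq2: "gdist E u w \<le> gdist E u q + gdist E q w" using gd_tri qV uV wV by blast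
    have dwq: "gdist E q w = 1" using gd_edge Esym q by blast
    have uq: "gdist E u q + 1 = gdist E u w" using dq1 dq2 dwq q zI wz zq by linarith
    have qnot: "q \<notin> Wh a b"
    proof
      assume "q \<in> Wh a b"
      then have "z \<in> Wh a b" using less.hyps[of u q z] uq uW zV dq1 dq2 dwq q zI wz zq by linarith
      then show False using zn by blast
    qed
    then have qW: "q \<in> Wh b a" using Wh_compl[OF e] qV by blast
    have ub: "gdist E u b = gdist E u a + 1" using Wh_eq[OF e uW] .
    have wb: "gdist E w b = gdist E w a + 1" using Wh_eq[OF e wW] .
    have pa: "gdist E p a = gdist E p b + 1" using Wh_eq[OF Esym[OF e] pW] .
    have qa: "gdist E q a = gdist E q b + 1" using Wh_eq[OF Esym[OF e] qW] .
    have pu: "gdist E p u = 1" using gd_edge Esym p by blast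
    have t1: "gdist E p a \<le> gdist E p u + gdist E u a" using gd_tri pV uV ab by blast
    have t2: "gdist E u b \<le> gdist E u p + gdist E p b" using gd_tri pV uV ab by blast
    have pb: "gdist E p b + 1 = gdist E u b" using t1 t2 pa ub pu dup by linarith
    have wq': "gdist E w q = 1" using gd_edge q by blast
    have t3: "gdist E q a \<le> gdist E q w + gdist E w a" using gd_tri qV wV ab by blast
    have t4: "gdist E w b \<le> gdist E w q + gdist E q b" using gd_tri qV wV ab by blast
    have qb: "gdist E q b + 1 = gdist E w b" using t3 t4 qa wb dwq wq' by linarith
    obtain x where x: "x \<in> interval V E p q" "x \<in> interval V E q b" "x \<in> interval V E p b"
      using M pV qV ab unfolding median_graph_def by blast
    have xV: "x \<in> V" using x by (simp add: interval_def)
    have x1: "gdist E p x + gdist E x q = gdist E p q"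
      and x2: "gdist E q x + gdist E x b = gdist E q b"
      and x3: "gdist E p x + gdist E x b = gdist E p b" using x by (auto simp: interval_def)
    have t5: "gdist E p a \<le> gdist E p x + gdist E x a" using gd_tri pV xV ab by blast
    have xW: "gdist E x b < gdist E x a" using t5 x3 pa by linarith
    have t6: "gdist E p q \<le> gdist E p z + gdist E z q" using gd_tri pV zV qV by blast
    have t7: "gdist E u x \<le> gdist E u p + gdist E p x" using gd_tri pV uV xV by blast
    have t8: "gdist E x w \<le> gdist E x q + gdist E q w" using gd_tri qV xV wV by blast
    have t9: "gdist E u w \<le> gdist E u x + gdist E x w" using gd_tri uV xV wV by blast
    have xuw: "gdist E u x + gdist E x w = gdist E u w"
      using t6 t7 t8 t9 x1 p q zI wz zq dup dwq by linarith
    have xq: "gdist E x q = gdist E q x" using gd_sym xV qV by simp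
    have wx: "gdist E w x = gdist E x w" using gd_sym xV wV by simp
    have t10: "gdist E w x \<le> gdist E w q + gdist E q x" using gd_tri qV xV wV by blast
    have t11: "gdist E w b \<le> gdist E w x + gdist E x b" using gd_tri wV xV ab by blast
    have xwb: "gdist E w x + gdist E x b = gdist E w b" using t10 t11 x2 qb wq' by linarith
    have t12: "gdist E u b \<le> gdist E u x + gdist E x b" using gd_tri uV xV ab by blast
    have xub: "gdist E u x + gdist E x b = gdist E u b" using t7 t12 x3 pb dup by linarith
    obtain m where m: "m \<in> interval V E u w" "m \<in> interval V E w a" "m \<in> interval V E u a"
      using M uV wV ab unfolding median_graph_def by blast
    have mV: "m \<in> V" using m by (simp add: interval_def)
    have m1: "gdist E u m + gdist E m w = gdist E u w"
      and m2: "gdist E w m + gdist E m a = gdist E w a"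
      and m3: "gdist E u m + gdist E m a = gdist E u a" using m by (auto simp: interval_def)
    have t13: "gdist E u b \<le> gdist E u m + gdist E m b" using gd_tri uV mV ab by blast
    have mb: "gdist E m b = gdist E m a + 1" using edge_side[OF e mV] t13 m3 ub by linarith
    have mwb: "gdist E w m + gdist E m b = gdist E w b" using mb m2 wb by linarith
    have mub: "gdist E u m + gdist E m b = gdist E u b" using mb m3 ub by linarith
    have "x = m"
    proof -
      have "\<exists>!y. y \<in> interval V E u w \<and> y \<in> interval V E w b \<and> y \<in> interval V E u b"
        using M uV wV ab unfolding median_graph_def by blast
      moreover have "x \<in> interval V E u w \<and> x \<in> interval V E w b \<and> x \<in> interval V E u b"
        using xV xuw xwb xub by (simp add: interval_def)
      moreover have "m \<in> interval V E u w \<and> m \<in> interval V E w b \<and> m \<in> interval V E u b"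
        using mV m1 mwb mub by (simp add: interval_def)
      ultimately show ?thesis by blast
    qed
    then show False using xW mb by simp
  qed
qed


lemma edge_lemma:
  assumes e: "E a b" and f: "E x y" and x: "x \<in> Wh a b" and y: "y \<notin> Wh a b"
  shows "Wh a b = Wh x y"
proof -
  have xV: "x \<in> V" and yV: "y \<in> V" using EV f by auto
  have yW: "y \<in> Wh b a" using Wh_compl[OF e] yV y by blast
  have xy: "gdist E x y = 1" "gdist E y x = 1" using gd_edge f Esym by auto
  show ?thesis
  proof (intro set_eqI iffI)
    fix w assume w: "w \<in> Wh a b"
    have wV: "w \<in> V" using w by (simp add: Wh_def)
    show "w \<in> Wh x y"
    proof (rule ccontr)
      assume "w \<notin> Wh x y"
      then have "w \<in> Wh y x" using Wh_compl[OF f] wV by blast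
      then have "gdist E w x = gdist E w y + 1" using Wh_eq[OF Esym[OF f]] by blast
      then have "gdist E w y + gdist E y x = gdist E w x" using xy by simp
      then have "y \<in> Wh a b" using convex[OF e w x yV] by blast
      then show False using y by blast
    qed
  next
    fix w assume w: "w \<in> Wh x y"
    have wV: "w \<in> V" using w by (simp add: Wh_def)
    show "w \<in> Wh a b"
    proof (rule ccontr)
      assume "w \<notin> Wh a b"
      then have wb: "w \<in> Wh b a" using Wh_compl[OF e] wV by blast
      have "gdist E w y = gdist E w x + 1" using Wh_eq[OF f w] by blast
      then have "gdist E w x + gdist E x y = gdist E w y" using xy by simp
      then have "x \<in> Wh b a" using convex[OF Esym[OF e] wb yW xV] by blast
      then show False using x Wh_compl[OF e] by blast
    qed
  qed
qed

lemma hs_Wh: "halfspaces V E = {Wh a b | a b. E a b}"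
  unfolding halfspaces_def Wh_def by blast

lemma chain_empty:
  assumes s: "\<And>n. s n \<in> halfspaces V E" and dec: "\<And>n. s (Suc n) \<subset> s n"
  shows "\<not> (\<forall>n. v \<in> s n)"
proof -
  obtain a0 b0 where ab0: "E a0 b0" "s 0 = Wh a0 b0" using s[of 0] hs_Wh by blast
  have wV: "b0 \<in> V" and w0: "b0 \<notin> s 0"
    using Wh_mem[OF Esym[OF ab0(1)]] Wh_compl[OF ab0(1)] ab0 EV by auto
  have "\<forall>v. gdist E v b0 = k \<longrightarrow> \<not> (\<forall>n. v \<in> s n)" for k
  proof (induction k)
    case 0
    show ?case
    proof (intro allI impI notI)
      fix v assume "gdist E v b0 = 0" "\<forall>n. v \<in> s n"
      moreover have "v \<in> V" using \<open>\<forall>n. v \<in> s n\<close> ab0 by (auto simp: Wh_def)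
      ultimately show False using gd_zero wV w0 by metis
    qed
  next
    case (Suc k)
    show ?case
    proof (intro allI impI notI)
      fix v assume d: "gdist E v b0 = Suc k" and vs: "\<forall>n. v \<in> s n"
      have vV: "v \<in> V" using vs ab0 by (auto simp: Wh_def)
      have "v \<noteq> b0" using vs w0 by auto
      then obtain p where p: "E v p" "gdist E p b0 + 1 = gdist E v b0" using gd_step vV wV by blast
      have "\<not> (\<forall>n. p \<in> s n)" using Suc.IH p d by simp
      then obtain N where pN: "p \<notin> s N" by blast
      have pN1: "p \<notin> s (Suc N)" using pN dec[of N] by blast
      obtain a b where ab: "E a b" "s N = Wh a b" using s[of N] hs_Wh by blast
      obtain a' b' where ab': "E a' b'" "s (Suc N) = Wh a' b'" using s[of "Suc N"] hs_Wh by blast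
      have "v \<in> s N" "v \<in> s (Suc N)" using vs by auto
      then have "s N = Wh v p" "s (Suc N) = Wh v p"
        using edge_lemma[OF ab(1) p(1)] edge_lemma[OF ab'(1) p(1)] ab ab' pN pN1 by auto
      then show False using dec[of N] by simp
    qed
  qed
  then show ?thesis by blast
qed


lemma hs_sub: "h \<in> halfspaces V E \<Longrightarrow> h \<subseteq> V"
  by (auto simp: hs_Wh Wh_def)

lemma hs_ne: "h \<in> halfspaces V E \<Longrightarrow> h \<noteq> {}"
  using Wh_mem by (auto simp: hs_Wh)

lemma hs_compl: "h \<in> halfspaces V E \<Longrightarrow> V - h \<in> halfspaces V E"
proof -
  assume "h \<in> halfspaces V E"
  then obtain a b where ab: "E a b" "h = Wh a b" by (auto simp: hs_Wh)
  then have "V - h = Wh b a" using Wh_compl by simp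
  then show ?thesis using Esym[OF ab(1)] by (auto simp: hs_Wh)
qed

lemma roller_agree: "U \<in> roller V E \<Longrightarrow> finite F \<Longrightarrow> F \<subseteq> halfspaces V E \<Longrightarrow>
  \<exists>v\<in>V. U \<inter> F = Uv V E v \<inter> F"
  by (simp add: roller_def)

lemma part1:
  assumes s: "\<And>n. s n \<in> halfspaces V E" and dec: "\<And>n. s (Suc n) \<subset> s n"
    and ss: "\<And>i j. i \<noteq> j \<Longrightarrow> strongly_separated V E (s i) (s j)"
  shows "\<exists>\<xi>. (\<Inter>n. hs_ext V E (s n)) = {\<xi>}"
proof -
  have anti: "m \<le> n \<Longrightarrow> s n \<subseteq> s m" for m n
  proof -
    assume mn: "m \<le> n"
    have "\<And>n. s (Suc n) \<le> s n" using dec by auto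
    then show "s n \<subseteq> s m" using lift_Suc_antimono_le[of s, OF _ mn] by blast
  qed
  have K: "(\<exists>n. s n \<subseteq> h) \<or> (\<exists>n. s n \<inter> h = {})" if h: "h \<in> halfspaces V E" for h
  proof (rule ccontr)
    assume "\<not> ?thesis"
    then have A: "\<And>n. \<not> s n \<subseteq> h" "\<And>n. s n \<inter> h \<noteq> {}" by auto
    have hV: "h \<subseteq> V" using hs_sub h by blast
    have "\<not> (\<forall>n. h \<subseteq> s n)"
    proof
      assume "\<forall>n. h \<subseteq> s n"
      moreover obtain v where "v \<in> h" using hs_ne h by blast
      ultimately show False using chain_empty[of s v, OF s dec] by blast
    qed
    then obtain a where a: "\<not> h \<subseteq> s a" by blast
    have "\<not> (\<forall>n. V - h \<subseteq> s n)"
    proof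
      assume "\<forall>n. V - h \<subseteq> s n"
      moreover obtain v where "v \<in> V - h" using hs_ne hs_compl h by blast
      ultimately show False using chain_empty[of s v, OF s dec] by blast
    qed
    then obtain b where b: "\<not> V - h \<subseteq> s b" by blast
    have tr: "transverse V h (s n)" if n: "n \<ge> a + b" for n
    proof -
      have "\<not> h \<subseteq> s n" using a anti[of a n] n by auto
      moreover have "\<not> V - h \<subseteq> s n" using b anti[of b n] n by auto
      moreover have "s n \<subseteq> V" using hs_sub s by blast
      ultimately show ?thesis using A[of n] hV unfolding transverse_def by (intro conjI; blast)
    qed
    have "transverse V h (s (a+b))" "transverse V h (s (Suc (a+b)))" using tr by auto
    then have "\<exists>m\<in>halfspaces V E. transverse V m (s (a+b)) \<and> transverse V m (s (Suc (a+b)))"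
      using h by blast
    then have "\<not> strongly_separated V E (s (a+b)) (s (Suc (a+b)))"
      unfolding strongly_separated_def by simp
    then show False using ss[of "a+b" "Suc (a+b)"] by simp
  qed
  have notboth: False if "s n \<subseteq> h" "s m \<inter> h = {}" for n m h
  proof -
    have "s (max n m) \<subseteq> s n" "s (max n m) \<subseteq> s m" using anti by auto
    then have "s (max n m) = {}" using that by blast
    then show False using hs_ne s by blast
  qed
  define \<xi> where "\<xi> = {h \<in> halfspaces V E. \<exists>n. s n \<subseteq> h}"
  have xr: "\<xi> \<in> roller V E"
    unfolding roller_def
  proof (intro CollectI conjI allI impI)
    show "\<xi> \<subseteq> halfspaces V E" by (auto simp: \<xi>_def)
    fix F assume F: "finite F \<and> F \<subseteq> halfspaces V E"
    have ev: "\<forall>h\<in>F. eventually (\<lambda>n. s n \<subseteq> h \<or> s n \<inter> h = {}) sequentially"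
    proof
      fix h assume "h \<in> F"
      then obtain N where N: "s N \<subseteq> h \<or> s N \<inter> h = {}" using K F by blast
      have "s n \<subseteq> h \<or> s n \<inter> h = {}" if "n \<ge> N" for n
        using anti[OF that] N by blast
      then show "eventually (\<lambda>n. s n \<subseteq> h \<or> s n \<inter> h = {}) sequentially"
        by (rule eventually_sequentiallyI)
    qed
    have "eventually (\<lambda>n. \<forall>h\<in>F. s n \<subseteq> h \<or> s n \<inter> h = {}) sequentially"
      using eventually_ball_finite[OF _ ev] F by simp
    then obtain N where N: "\<forall>h\<in>F. s N \<subseteq> h \<or> s N \<inter> h = {}"
      unfolding eventually_sequentially by blast
    obtain v where v: "v \<in> s N" using hs_ne s by blast
    have vV: "v \<in> V" using v hs_sub s by blast
    have "\<xi> \<inter> F = Uv V E v \<inter> F"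
    proof (intro set_eqI iffI)
      fix h assume "h \<in> \<xi> \<inter> F"
      then obtain n where n: "s n \<subseteq> h" "h \<in> F" "h \<in> halfspaces V E" by (auto simp: \<xi>_def)
      have "s N \<subseteq> h \<or> s N \<inter> h = {}" using N n(2) by blast
      then have "s N \<subseteq> h" using notboth[of n h N] n(1) by blast
      then show "h \<in> Uv V E v \<inter> F" using v \<open>h \<in> F\<close> \<open>h \<in> halfspaces V E\<close> by (auto simp: Uv_def)
    next
      fix h assume h: "h \<in> Uv V E v \<inter> F"
      then have "s N \<subseteq> h" using N v by (auto simp: Uv_def)
      then show "h \<in> \<xi> \<inter> F" using h by (auto simp: Uv_def \<xi>_def)
    qed
    then show "\<exists>v\<in>V. \<xi> \<inter> F = Uv V E v \<inter> F" using vV by blast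
  qed
  have "(\<Inter>n. hs_ext V E (s n)) = {\<xi>}"
  proof (intro set_eqI iffI)
    fix \<eta> assume "\<eta> \<in> (\<Inter>n. hs_ext V E (s n))"
    then have er: "\<eta> \<in> roller V E" and es: "\<And>n. s n \<in> \<eta>" by (auto simp: hs_ext_def)
    have eH: "\<eta> \<subseteq> halfspaces V E" using er by (simp add: roller_def)
    have "\<eta> = \<xi>"
    proof (intro set_eqI iffI)
      fix h assume he: "h \<in> \<eta>"
      then have hH: "h \<in> halfspaces V E" using eH by blast
      show "h \<in> \<xi>"
      proof (rule ccontr)
        assume "h \<notin> \<xi>"
        then have "\<not> (\<exists>n. s n \<subseteq> h)" using hH by (simp add: \<xi>_def)
        then obtain n where n: "s n \<inter> h = {}" using K[OF hH] by blast
        obtain v where "v \<in> V" "\<eta> \<inter> {h, s n} = Uv V E v \<inter> {h, s n}"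
          using roller_agree[OF er, of "{h, s n}"] hH s by auto
        then have "v \<in> h" "v \<in> s n" using he es[of n] by (auto simp: Uv_def)
        then show False using n by blast
      qed
    next
      fix h assume "h \<in> \<xi>"
      then obtain n where hH: "h \<in> halfspaces V E" and n: "s n \<subseteq> h" by (auto simp: \<xi>_def)
      obtain v where "v \<in> V" "\<eta> \<inter> {h, s n} = Uv V E v \<inter> {h, s n}"
        using roller_agree[OF er, of "{h, s n}"] hH s by auto
      moreover have "s n \<in> \<eta>" using es by blast
      ultimately have "v \<in> s n" by (auto simp: Uv_def)
      then have "h \<in> Uv V E v \<inter> {h, s n}" using n hH by (auto simp: Uv_def)
      then show "h \<in> \<eta>" using \<open>\<eta> \<inter> {h, s n} = Uv V E v \<inter> {h, s n}\<close> by blast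
    qed
    then show "\<eta> \<in> {\<xi>}" by simp
  next
    fix \<eta> assume "\<eta> \<in> {\<xi>}"
    then have "\<eta> = \<xi>" by simp
    moreover have "s n \<in> \<xi>" for n using s[of n] by (auto simp: \<xi>_def)
    ultimately show "\<eta> \<in> (\<Inter>n. hs_ext V E (s n))" using xr by (simp add: hs_ext_def)
  qed
  then show ?thesis by blast
qed


lemma ss_sym: "strongly_separated V E h k \<longleftrightarrow> strongly_separated V E k h"
  unfolding strongly_separated_def by blast

lemma part2_aux:
  assumes r1: "\<xi>1 \<in> regular_points V E" and r2: "\<xi>2 \<in> regular_points V E"
    and h1: "h \<in> \<xi>1" and h2: "h \<notin> \<xi>2"
  shows "\<exists>h1\<in>halfspaces V E. \<exists>h2\<in>halfspaces V E.
               h1 \<inter> h2 = {} \<and> strongly_separated V E h1 h2 \<and>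
               \<xi>1 \<in> hs_ext V E h1 \<and> \<xi>2 \<in> hs_ext V E h2"
proof -
  have x1: "\<xi>1 \<in> roller V E" and x2: "\<xi>2 \<in> roller V E"
    using r1 r2 by (auto simp: regular_points_def roller_boundary_def)
  have H1: "\<xi>1 \<subseteq> halfspaces V E" and H2: "\<xi>2 \<subseteq> halfspaces V E"
    using x1 x2 by (auto simp: roller_def)
  have hH: "h \<in> halfspaces V E" using h1 H1 by blast
  have hV: "h \<subseteq> V" using hs_sub hH by blast
  have hcH: "V - h \<in> halfspaces V E" using hs_compl hH by blast
  obtain v where v: "v \<in> V" "\<xi>2 \<inter> {h, V - h} = Uv V E v \<inter> {h, V - h}"
    using roller_agree[OF x2, of "{h, V - h}"] hH hcH by auto
  have "v \<notin> h" using v h2 hH by (auto simp: Uv_def)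
  then have hc2: "V - h \<in> \<xi>2" using v hcH by (auto simp: Uv_def)
  have R1: "\<forall>h1\<in>\<xi>1. \<forall>h2\<in>\<xi>1. \<exists>k\<in>\<xi>1. k \<subseteq> h1 \<inter> h2 \<and>
      strongly_separated V E k h1 \<and> strongly_separated V E k h2"
    using r1 by (simp add: regular_points_def)
  have R2: "\<forall>h1\<in>\<xi>2. \<forall>h2\<in>\<xi>2. \<exists>k\<in>\<xi>2. k \<subseteq> h1 \<inter> h2 \<and>
      strongly_separated V E k h1 \<and> strongly_separated V E k h2"
    using r2 by (simp add: regular_points_def)
  have "\<exists>k\<in>\<xi>1. k \<subseteq> h \<inter> h \<and> strongly_separated V E k h \<and> strongly_separated V E k h"
    using bspec[OF bspec[OF R1 h1] h1] .
  then obtain k1 where k1: "k1 \<in> \<xi>1" "k1 \<subseteq> h" "strongly_separated V E k1 h" by auto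
  have "\<exists>k\<in>\<xi>2. k \<subseteq> (V-h) \<inter> (V-h) \<and> strongly_separated V E k (V-h) \<and> strongly_separated V E k (V-h)"
    using bspec[OF bspec[OF R2 hc2] hc2] .
  then obtain k2 where k2: "k2 \<in> \<xi>2" "k2 \<subseteq> V - h" "strongly_separated V E k2 (V - h)" by auto
  have k1H: "k1 \<in> halfspaces V E" and k2H: "k2 \<in> halfspaces V E" using k1 k2 H1 H2 by auto
  have disj: "k1 \<inter> k2 = {}" using k1 k2 by blast
  have "strongly_separated V E k1 k2"
    unfolding strongly_separated_def
  proof
    assume "\<exists>m\<in>halfspaces V E. transverse V m k1 \<and> transverse V m k2"
    then obtain m where m: "m \<in> halfspaces V E" "transverse V m k1" "transverse V m k2" by blast
    have "transverse V m h" using m k1(2) k2(2) unfolding transverse_def by (intro conjI; blast)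
    then show False using k1(3) m unfolding strongly_separated_def by blast
  qed
  then show ?thesis using k1H k2H disj k1 k2 x1 x2 by (auto simp: hs_ext_def)
qed

lemma part2:
  assumes r1: "\<xi>1 \<in> regular_points V E" and r2: "\<xi>2 \<in> regular_points V E" and ne: "\<xi>1 \<noteq> \<xi>2"
  shows "\<exists>h1\<in>halfspaces V E. \<exists>h2\<in>halfspaces V E.
               h1 \<inter> h2 = {} \<and> strongly_separated V E h1 h2 \<and>
               \<xi>1 \<in> hs_ext V E h1 \<and> \<xi>2 \<in> hs_ext V E h2"
proof -
  obtain h where "(h \<in> \<xi>1 \<and> h \<notin> \<xi>2) \<or> (h \<in> \<xi>2 \<and> h \<notin> \<xi>1)" using ne by blast
  then show ?thesis
  proof
    assume "h \<in> \<xi>1 \<and> h \<notin> \<xi>2" then show ?thesis using part2_aux[OF r1 r2, of h] by simp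
  next
    assume "h \<in> \<xi>2 \<and> h \<notin> \<xi>1"
    then obtain h1 h2 where "h1 \<in> halfspaces V E" "h2 \<in> halfspaces V E"
        "h1 \<inter> h2 = {}" "strongly_separated V E h1 h2" "\<xi>2 \<in> hs_ext V E h1" "\<xi>1 \<in> hs_ext V E h2"
      using part2_aux[OF r2 r1, of h] by auto
    then show ?thesis using ss_sym by blast
  qed
qed

end

theorem corollary7p5:
  fixes V :: "'v set" and E :: "'v \<Rightarrow> 'v \<Rightarrow> bool"
  assumes "median_graph V E"
    and "countable V"
    and "finite_dimensional V E"
    and "irreducible_cc V E"
  shows "(\<forall>s :: nat \<Rightarrow> 'v set.
            (\<forall>n. s n \<in> halfspaces V E) \<and> (\<forall>n. s (Suc n) \<subset> s n) \<and>
            (\<forall>i j. i \<noteq> j \<longrightarrow> strongly_separated V E (s i) (s j))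
          \<longrightarrow> (\<exists>\<xi>. (\<Inter>n. hs_ext V E (s n)) = {\<xi>}))
       \<and> (\<forall>\<xi>1\<in>regular_points V E. \<forall>\<xi>2\<in>regular_points V E. \<xi>1 \<noteq> \<xi>2 \<longrightarrow>
            (\<exists>h1\<in>halfspaces V E. \<exists>h2\<in>halfspaces V E.
               h1 \<inter> h2 = {} \<and> strongly_separated V E h1 h2 \<and>
               \<xi>1 \<in> hs_ext V E h1 \<and> \<xi>2 \<in> hs_ext V E h2))"
proof (intro conjI allI impI ballI)
  fix s :: "nat \<Rightarrow> 'v set"
  assume "(\<forall>n. s n \<in> halfspaces V E) \<and> (\<forall>n. s (Suc n) \<subset> s n) \<and>
            (\<forall>i j. i \<noteq> j \<longrightarrow> strongly_separated V E (s i) (s j))"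
  then show "\<exists>\<xi>. (\<Inter>n. hs_ext V E (s n)) = {\<xi>}" using part1[OF assms(1), of s] by blast
next
  fix \<xi>1 \<xi>2 assume "\<xi>1 \<in> regular_points V E" "\<xi>2 \<in> regular_points V E" "\<xi>1 \<noteq> \<xi>2"
  then show "\<exists>h1\<in>halfspaces V E. \<exists>h2\<in>halfspaces V E.
               h1 \<inter> h2 = {} \<and> strongly_separated V E h1 h2 \<and>
               \<xi>1 \<in> hs_ext V E h1 \<and> \<xi>2 \<in> hs_ext V E h2"
    using part2[OF assms(1)] by blast
qed

end
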